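(* Let $\bm{Z}$ be a $p\times q$ matrix with rows $\bm{z}_1^T,\ldots,\bm{z}_p^T$, and let $\bm{U}$ be the submatrix consisting of the distinct rows of $\bm{Z}$; suppose $\bm{U}$ has $q$ rows and rank $q$. Let $m_j(\bm{\omega})=1/(1+e^{-\bm{z}_j^T\bm{\omega}})$, let $\bm{\omega}\sim N(\mathbf0,g(\bm{Z}^T\bm{Z}/p)^{-1})$ with $g>0$ (prior density $\pi(\bm{\omega})$), and let $f(\bm{\omega})=\sum_{\bm{\gamma}\in\{0,1\}^p}\pi(\bm{\gamma}\mid\bm{y},\bm{\omega}')\log\pi(\bm{\gamma}\mid\bm{\omega})$ with $\pi(\bm{\gamma}\mid\bm{\omega})=\prod_j\mathrm{Bern}(\gamma_j;m_j(\bm{\omega}))$ and a fixed posterior $\pi(\bm{\gamma}\mid\bm{y},\bm{\omega}')$ with inclusion probabilities $\hat\pi_i=\pi(\gamma_i=1\mid\bm{y},\bm{\omega}')$. Let $\tilde{\bm{Z}}=\bm{Z}\bm{U}^{-1}$ with entries $\tilde z_{ij}$, let $a_j=\sum_{i=1}^p\tilde z_{ij}\hat\pi_i\big/\sum_{i=1}^p\tilde z_{ij}$, and let $h(a,c)$ denote the solution $w$ of $1/(1+e^{-w})+w/c=a$. Define $\tilde\omega_j=h(a_j,gp)$ for $j=1,\ldots,q$ and $\hat{\bm{\omega}}=\bm{U}^{-1}\tilde{\bm{\omega}}$. Then $\nabla_{\bm{\omega}}f(\hat{\bm{\omega}})+\nabla_{\bm{\omega}}\log\pi(\hat{\bm{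\omega}})=\mathbf0$.
   Context: $\pi(\bm{\gamma}\mid\bm{y},\bm{\omega}')\propto p(\bm{y}\mid\bm{\gamma})\pi(\bm{\gamma}\mid\bm{\omega}')$ is the posterior over models at the current EM iterate $\bm{\omega}'$; $f$ plus $\log\pi(\bm{\omega})$ is the M-step objective. *)

theory Defs
  imports "HOL-Analysis.Analysis"
begin

definition logistic :: "real \<Rightarrow> real" where
  "logistic w = 1 / (1 + exp (- w))"

definition mprob :: "real^'q^'p \<Rightarrow> 'p \<Rightarrow> real^'q \<Rightarrow> real" where
  "mprob Z j \<omega> = logistic (Z $ j \<bullet> \<omega>)"

definition bern :: "bool \<Rightarrow> real \<Rightarrow> real" where
  "bern x m = (if x then m else 1 - m)"

definition prior_gamma :: "real^'q^'p \<Rightarrow> real^'q \<Rightarrow> ('p::finite \<Rightarrow> bool) \<Rightarrow> real" where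
  "prior_gamma Z \<omega> \<gamma> = (\<Prod>j\<in>UNIV. bern (\<gamma> j) (mprob Z j \<omega>))"

text \<open>Posterior pi(gamma | y, omega') proportional to p(y|gamma) pi(gamma|omega');
  lik gamma stands for p(y | gamma) with the data y fixed.\<close>
definition post_gamma ::
  "(('p::finite \<Rightarrow> bool) \<Rightarrow> real) \<Rightarrow> real^'q^'p \<Rightarrow> real^'q \<Rightarrow> ('p \<Rightarrow> bool) \<Rightarrow> real" where
  "post_gamma lik Z \<omega>' \<gamma> =
     lik \<gamma> * prior_gamma Z \<omega>' \<gamma> / (\<Sum>\<delta>\<in>UNIV. lik \<delta> * prior_gamma Z \<omega>' \<delta>)"

definition incl_prob ::
  "(('p::finite \<Rightarrow> bool) \<Rightarrow> real) \<Rightarrow> real^'q^'p \<Rightarrow> real^'q \<Rightarrow> 'p \<Rightarrow> real" where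
  "incl_prob lik Z \<omega>' i = (\<Sum>\<gamma>\<in>{\<gamma>. \<gamma> i}. post_gamma lik Z \<omega>' \<gamma>)"

definition Estep_f ::
  "(('p::finite \<Rightarrow> bool) \<Rightarrow> real) \<Rightarrow> real^'q^'p \<Rightarrow> real^'q \<Rightarrow> real^'q \<Rightarrow> real" where
  "Estep_f lik Z \<omega>' \<omega> = (\<Sum>\<gamma>\<in>UNIV. post_gamma lik Z \<omega>' \<gamma> * ln (prior_gamma Z \<omega> \<gamma>))"

definition mvn_density :: "real^'q^'q \<Rightarrow> real^'q \<Rightarrow> real" where
  "mvn_density S x =
     exp (- (1/2) * (x \<bullet> (matrix_inv S *v x))) / sqrt ((2 * pi) ^ CARD('q) * det S)"

definition prior_cov :: "real \<Rightarrow> real^'q^'p \<Rightarrow> real^'q^'q" where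
  "prior_cov g Z = g *\<^sub>R matrix_inv ((1 / real CARD('p)) *\<^sub>R (transpose Z ** Z))"

definition prior_omega :: "real \<Rightarrow> real^'q^'p \<Rightarrow> real^'q \<Rightarrow> real" where
  "prior_omega g Z \<omega> = mvn_density (prior_cov g Z) \<omega>"

definition hsol :: "real \<Rightarrow> real \<Rightarrow> real" where
  "hsol a c = (THE w. logistic w + w / c = a)"

end

theory Submission
  imports Defs
begin

lemma scaleR_mat_mul: "(c *\<^sub>R (A::real^'n^'m)) = mat c ** A"
  by (simp add: vec_eq_iff matrix_matrix_mult_def mat_def if_distrib[where f="\<lambda>x. x * _"] cong: if_cong)

lemma det_scaleR_cart: "det (c *\<^sub>R (A::real^'n^'n)) = c ^ CARD('n) * det A"
proof -
  have "det (mat c :: real^'n^'n) = c ^ CARD('n)"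
    by (subst det_diagonal) (auto simp: mat_def)
  then show ?thesis by (simp add: scaleR_mat_mul det_mul)
qed

lemma matrix_inv_unique_cart:
  fixes A B :: "real^'n^'n"
  assumes "A ** B = mat 1"
  shows "matrix_inv A = B" "invertible A"
proof -
  have BA: "B ** A = mat 1" using assms matrix_left_right_inverse by blast
  show inv: "invertible A" using assms BA invertible_def by blast
  have "A ** matrix_inv A = mat 1 \<and> matrix_inv A ** A = mat 1"
    unfolding matrix_inv_def by (rule someI_ex) (use assms BA in blast)
  then have "matrix_inv A ** A = mat 1" by blast
  then have "matrix_inv A ** (A ** B) = B" by (simp add: matrix_mul_assoc)
  then show "matrix_inv A = B" using assms by simp
qed

lemma matrix_inv_right_cart:
  fixes A :: "real^'n^'n"
  assumes "invertible A"
  shows "A ** matrix_inv A = mat 1" "matrix_inv A ** A = mat 1"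
proof -
  have "A ** matrix_inv A = mat 1 \<and> matrix_inv A ** A = mat 1"
    unfolding matrix_inv_def by (rule someI_ex) (use assms in \<open>auto simp: invertible_def\<close>)
  then show "A ** matrix_inv A = mat 1" "matrix_inv A ** A = mat 1" by auto
qed

lemma logistic_pos: "0 < logistic t" "logistic t < 1"
  unfolding logistic_def by (auto simp: field_simps add_pos_pos)

lemma deriv_ln_bern:
  "((\<lambda>t. ln (bern b (logistic t))) has_real_derivative (of_bool b - logistic t)) (at t)"
proof (cases b)
  case True
  have e: "(\<lambda>t. ln (bern b (logistic t))) = (\<lambda>t. - ln (1 + exp (- t)))"
    using True by (auto simp: bern_def logistic_def ln_div fun_eq_iff add_pos_pos)
  have p: "1 + exp (- t) > 0" by (simp add: add_pos_pos)
  show ?thesis unfolding e using True p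
    by (auto intro!: derivative_eq_intros simp: logistic_def diff_divide_eq_iff)
next
  case False
  have e: "(\<lambda>t. ln (bern b (logistic t))) = (\<lambda>t. - t - ln (1 + exp (- t)))"
  proof
    fix t :: real
    have "1 - 1 / (1 + exp (- t)) = exp (-t) / (1 + exp (-t))"
    proof -
      have "(1::real) + exp (- t) > 0" by (simp add: add_pos_pos)
      then show ?thesis by (simp add: diff_divide_eq_iff)
    qed
    then show "ln (bern b (logistic t)) = - t - ln (1 + exp (- t))"
      using False by (simp add: bern_def logistic_def ln_div add_pos_pos) (smt (verit) exp_gt_zero)
  qed
  have p: "1 + exp (- t) > 0" by (simp add: add_pos_pos)
  show ?thesis unfolding e using False p
    by (auto intro!: derivative_eq_intros simp: logistic_def field_simps)
qed

lemma hsol_ex1: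
  assumes "c > 0"
  shows "\<exists>!w. logistic w + w / c = a"
proof -
  let ?f = "\<lambda>w. logistic w + w / c"
  have cont: "isCont ?f x" for x
    unfolding logistic_def using assms
    by (auto intro!: continuous_intros simp: add_pos_pos) (smt (verit) exp_gt_zero)
  have "?f (c * (a - 1)) \<le> a" using logistic_pos[of "c * (a - 1)"] assms by simp
  moreover have "a \<le> ?f (c * a)" using logistic_pos[of "c * a"] assms by simp
  moreover have "c * (a - 1) \<le> c * a" using assms by simp
  ultimately obtain w where "?f w = a" using IVT[of ?f "c * (a - 1)" a "c * a"] cont by blast
  moreover have "?f x < ?f y" if "x < y" for x y
  proof -
    have "logistic x \<le> logistic y" unfolding logistic_def
      using that by (auto intro!: divide_left_mono add_pos_pos mult_pos_pos)
    moreover have "x / c < y / c" using that assms by (simp add: divide_strict_right_mono)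
    ultimately show ?thesis by simp
  qed
  ultimately show ?thesis by (metis linorder_neqE_linordered_idom order_less_irrefl)
qed

theorem proposition1:
  fixes Z :: "real^'q^'p"
    and U :: "real^'q^'q"
    and g :: real
    and lik :: "('p \<Rightarrow> bool) \<Rightarrow> real"
    and \<omega>' :: "real^'q"
  assumes U_distinct: "inj (\<lambda>k. U $ k)"
    and U_rows: "range (\<lambda>k. U $ k) = range (\<lambda>i. Z $ i)"
    and U_rank: "rank U = CARD('q)"
    and g_pos: "g > 0"
    and lik_nonneg: "\<And>\<gamma>. lik \<gamma> \<ge> 0"
    and lik_norm: "(\<Sum>\<delta>\<in>UNIV. lik \<delta> * prior_gamma Z \<omega>' \<delta>) > 0"
  shows
    "let Zt = Z ** matrix_inv U;
         pihat = incl_prob lik Z \<omega>';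
         a = (\<lambda>j. (\<Sum>i\<in>UNIV. Zt $ i $ j * pihat i) / (\<Sum>i\<in>UNIV. Zt $ i $ j));
         \<omega>t = (\<chi> j. hsol (a j) (g * real CARD('p)));
         \<omega>hat = matrix_inv U *v \<omega>t
     in \<exists>Gf Gp :: real^'q.
          (Estep_f lik Z \<omega>' has_derivative (\<lambda>v. Gf \<bullet> v)) (at \<omega>hat) \<and>
          ((\<lambda>\<omega>. ln (prior_omega g Z \<omega>)) has_derivative (\<lambda>v. Gp \<bullet> v)) (at \<omega>hat) \<and>
          Gf + Gp = 0"
  proof -
  define p where "p = real CARD('p)"
  have p_pos: "p > 0" by (simp add: p_def)
  define c where "c = 1 / (g * p)"
  have inj_U: "inj ((*v) U)" using U_rank full_rank_injective by blast
  then obtain B where "B ** U = mat 1" using matrix_left_invertible_injective by blast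
  then have invU: "invertible U" using invertible_left_inverse by blast
  note UUi = matrix_inv_right_cart[OF invU]
  define \<sigma> where "\<sigma> i = inv (\<lambda>k. U $ k) (Z $ i)" for i
  have Us: "U $ \<sigma> i = Z $ i" for i
    unfolding \<sigma>_def using U_rows by (metis f_inv_into_f rangeI)
  have s_eq: "\<sigma> i = k \<longleftrightarrow> Z $ i = U $ k" for i k
    using Us U_distinct by (metis injD)
  define n where "n k = card {i. \<sigma> i = k}" for k
  have n_pos: "n k > 0" for k
  proof -
    have "U $ k \<in> range (\<lambda>i. Z $ i)" using U_rows by blast
    then obtain i where "Z $ i = U $ k" by auto
    then have "i \<in> {i. \<sigma> i = k}" using s_eq by auto
    then show ?thesis unfolding n_def by (auto simp: card_gt_0_iff)
  qed
  have group: "(\<Sum>i\<in>UNIV. h i) = (\<Sum>k\<in>UNIV. \<Sum>i\<in>{i. \<sigma> i = k}. h i)" for h :: "'p \<Rightarrow> 'b::comm_monoid_add"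
    using sum.group[of UNIV UNIV \<sigma> h] by simp
  have Zt: "(Z ** matrix_inv U) $ i $ j = (if \<sigma> i = j then 1 else 0)" for i j
  proof -
    have "(Z ** matrix_inv U) $ i $ j = (U ** matrix_inv U) $ \<sigma> i $ j"
      by (simp add: matrix_matrix_mult_def Us)
    then show ?thesis using UUi(1) by (simp add: mat_def)
  qed
  define pihat where "pihat = incl_prob lik Z \<omega>'"
  define a where "a j = (\<Sum>i\<in>UNIV. (Z ** matrix_inv U) $ i $ j * pihat i) / (\<Sum>i\<in>UNIV. (Z ** matrix_inv U) $ i $ j)" for j
  have a_eq: "a k * real (n k) = (\<Sum>i\<in>{i. \<sigma> i = k}. pihat i)" for k
  proof -
    have "(\<Sum>i\<in>UNIV. (Z ** matrix_inv U) $ i $ k * pihat i) = (\<Sum>i\<in>{i. \<sigma> i = k}. pihat i)"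
      by (simp add: Zt if_distrib[where f="\<lambda>x. x * _"] sum.If_cases cong: if_cong)
    moreover have "(\<Sum>i\<in>UNIV. (Z ** matrix_inv U) $ i $ k) = real (n k)"
      by (simp add: Zt n_def sum.If_cases)
    ultimately show ?thesis using n_pos[of k] by (simp add: a_def)
  qed
  define wt where "wt = (\<chi> j. hsol (a j) (g * p))"
  define wh where "wh = matrix_inv U *v wt"
  have Zw: "Z $ i \<bullet> wh = wt $ \<sigma> i" for i
  proof -
    have "U *v wh = wt" by (simp add: wh_def matrix_vector_mul_assoc UUi)
    then have "U $ \<sigma> i \<bullet> wh = wt $ \<sigma> i" by (metis matrix_vector_mul_component)
    then show ?thesis by (simp add: Us)
  qed
  have hs: "logistic (wt $ k) + wt $ k / (g * p) = a k" for k
    using theI'[OF hsol_ex1[of "g*p" "a k"]] g_pos p_pos by (simp add: wt_def hsol_def)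
  define M where "M = transpose Z ** Z"
  define D :: "real^'q^'q" where "D = (\<chi> i j. if i = j then real (n i) else 0)"
  have M_eq: "M = transpose U ** (D ** U)"
  proof -
    have "M $ x $ y = (transpose U ** (D ** U)) $ x $ y" for x y
    proof -
      have "M $ x $ y = (\<Sum>i\<in>UNIV. U $ \<sigma> i $ x * U $ \<sigma> i $ y)"
        by (simp add: M_def matrix_matrix_mult_def transpose_def Us)
      also have "... = (\<Sum>k\<in>UNIV. real (n k) * (U $ k $ x * U $ k $ y))"
        by (subst group) (simp add: n_def)
      also have "... = (transpose U ** (D ** U)) $ x $ y"
        by (simp add: matrix_matrix_mult_def transpose_def D_def if_distrib[where f="\<lambda>x. x * _"] cong: if_cong)
           (simp add: algebra_simps sum_distrib_left)
      finally show ?thesis .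
    qed
    then show ?thesis by (simp add: vec_eq_iff)
  qed
  have detD: "det D = (\<Prod>k\<in>UNIV. real (n k))" by (subst det_diagonal) (auto simp: D_def)
  have detD_pos: "det D > 0" using n_pos by (simp add: detD prod_pos)
  have detU: "det U \<noteq> 0" using invU invertible_det_nz by blast
  have "det M = det D * (det U)^2" by (simp add: M_eq det_mul power2_eq_square)
  then have detM: "det M > 0" using detD_pos detU by simp
  have invM: "invertible M" using detM invertible_det_nz by fastforce
  define N where "N = matrix_inv M"
  have MN: "M ** N = mat 1" using matrix_inv_right_cart[OF invM] N_def by simp
  have NM: "N ** M = mat 1" using matrix_inv_right_cart[OF invM] N_def by simp
  have "det M * det N = 1" using MN det_mul[of M N] by (simp add: det_I)
  then have detN: "det N > 0" using detM by (smt (verit) mult_nonneg_nonpos)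
  have inv1: "matrix_inv ((1 / p) *\<^sub>R M) = p *\<^sub>R N"
    by (rule matrix_inv_unique_cart(1)) (use MN p_pos in \<open>simp add: matrix_scalar_ac\<close>)
  have S_eq: "prior_cov g Z = (g * p) *\<^sub>R N"
    by (simp add: prior_cov_def M_def[symmetric] p_def[symmetric] inv1)
  have Sinv: "matrix_inv (prior_cov g Z) = c *\<^sub>R M"
    unfolding S_eq
    by (rule matrix_inv_unique_cart(1)) (use NM p_pos g_pos in \<open>simp add: matrix_scalar_ac c_def\<close>)
  have detS: "det (prior_cov g Z) > 0" using detN g_pos p_pos by (simp add: S_eq det_scaleR_cart)
  define C where "C = sqrt ((2 * pi) ^ CARD('q) * det (prior_cov g Z))"
  have C_pos: "C > 0" unfolding C_def using detS by simp
  have quad: "x \<bullet> (M *v x) = (\<Sum>i\<in>UNIV. (Z $ i \<bullet> x)^2)" for x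
  proof -
    have "M *v x = transpose Z *v (Z *v x)" by (simp add: M_def matrix_vector_mul_assoc)
    then have "x \<bullet> (M *v x) = (Z *v x) \<bullet> (Z *v x)"
      by (metis dot_lmul_matrix vector_transpose_matrix)
    then show ?thesis by (simp add: inner_vec_def matrix_vector_mul_component power2_eq_square)
  qed
  have lnprior: "ln (prior_omega g Z x) = - (1/2) * (c * (\<Sum>i\<in>UNIV. (Z $ i \<bullet> x)^2)) - ln C" for x
    unfolding prior_omega_def mvn_density_def C_def[symmetric] Sinv
    using C_pos by (simp add: ln_div quad flip: scaleR_matrix_vector_assoc)
  define Gp where "Gp = - c *\<^sub>R (\<Sum>i\<in>UNIV. (Z $ i \<bullet> wh) *\<^sub>R Z $ i)"
  have dP: "((\<lambda>\<omega>. ln (prior_omega g Z \<omega>)) has_derivative (\<lambda>v. Gp \<bullet> v)) (at wh)"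
    unfolding lnprior
    apply (rule has_derivative_eq_rhs)
     apply (auto intro!: derivative_eq_intros)[1]
    apply (simp add: Gp_def fun_eq_iff inner_sum_left sum_distrib_left algebra_simps)
    done
  have post_sum: "(\<Sum>\<gamma>\<in>UNIV. post_gamma lik Z \<omega>' \<gamma>) = 1"
    unfolding post_gamma_def using lik_norm by (simp add: sum_divide_distrib[symmetric])
  have pihat_eq: "pihat j = (\<Sum>\<gamma>\<in>UNIV. post_gamma lik Z \<omega>' \<gamma> * of_bool (\<gamma> j))" for j
    by (simp add: pihat_def incl_prob_def sum.If_cases)
  have bern_pos: "bern b (logistic t) > 0" for b t
    using logistic_pos[of t] by (simp add: bern_def)
  have Ef: "Estep_f lik Z \<omega>' = (\<lambda>\<omega>. \<Sum>\<gamma>\<in>UNIV. post_gamma lik Z \<omega>' \<gamma> * (\<Sum>j\<in>UNIV. ln (bern (\<gamma> j) (logistic (Z $ j \<bullet> \<omega>)))))"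
    unfolding Estep_f_def prior_gamma_def mprob_def
    by (simp add: ln_prod bern_pos fun_eq_iff less_imp_neq[OF bern_pos, symmetric])
  have dL: "((\<lambda>\<omega>. ln (bern b (logistic (z \<bullet> \<omega>)))) has_derivative (\<lambda>v. (of_bool b - logistic (z \<bullet> wh)) * (z \<bullet> v))) (at wh)" for b and z :: "real^'q"
  proof -
    have "((\<lambda>\<omega>. z \<bullet> \<omega>) has_derivative (\<lambda>v. z \<bullet> v)) (at wh)"
      by (auto intro!: derivative_eq_intros)
    from has_derivative_compose[OF this deriv_ln_bern[of b "z \<bullet> wh", unfolded has_field_derivative_def]]
    show ?thesis by simp
  qed
  define Gf where "Gf = (\<Sum>j\<in>UNIV. (pihat j - logistic (Z $ j \<bullet> wh)) *\<^sub>R Z $ j)"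
  have dF: "(Estep_f lik Z \<omega>' has_derivative (\<lambda>v. Gf \<bullet> v)) (at wh)"
    unfolding Ef
  proof (rule has_derivative_eq_rhs)
    show "((\<lambda>\<omega>. \<Sum>\<gamma>\<in>UNIV. post_gamma lik Z \<omega>' \<gamma> * (\<Sum>j\<in>UNIV. ln (bern (\<gamma> j) (logistic (Z $ j \<bullet> \<omega>)))))
      has_derivative (\<lambda>v. \<Sum>\<gamma>\<in>UNIV. post_gamma lik Z \<omega>' \<gamma> * (\<Sum>j\<in>UNIV. (of_bool (\<gamma> j) - logistic (Z $ j \<bullet> wh)) * (Z $ j \<bullet> v)))) (at wh)"
      by (intro has_derivative_sum has_derivative_mult_right dL)
    show "(\<lambda>v. \<Sum>\<gamma>\<in>UNIV. post_gamma lik Z \<omega>' \<gamma> * (\<Sum>j\<in>UNIV. (of_bool (\<gamma> j) - logistic (Z $ j \<bullet> wh)) * (Z $ j \<bullet> v))) = (\<lambda>v. Gf \<bullet> v)"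
    proof
      fix v
      have "(\<Sum>\<gamma>\<in>UNIV. post_gamma lik Z \<omega>' \<gamma> * (\<Sum>j\<in>UNIV. (of_bool (\<gamma> j) - logistic (Z $ j \<bullet> wh)) * (Z $ j \<bullet> v)))
          = (\<Sum>j\<in>UNIV. \<Sum>\<gamma>\<in>UNIV. (post_gamma lik Z \<omega>' \<gamma> * of_bool (\<gamma> j) - post_gamma lik Z \<omega>' \<gamma> * logistic (Z $ j \<bullet> wh)) * (Z $ j \<bullet> v))"
        by (subst sum.swap) (simp add: sum_distrib_left algebra_simps)
      also have "... = (\<Sum>j\<in>UNIV. (pihat j - logistic (Z $ j \<bullet> wh)) * (Z $ j \<bullet> v))"
        by (simp add: sum_distrib_right[symmetric] sum_subtractf pihat_eq post_sum flip: sum_distrib_right)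
      also have "... = Gf \<bullet> v"
        by (simp add: Gf_def inner_sum_left)
      finally show "(\<Sum>\<gamma>\<in>UNIV. post_gamma lik Z \<omega>' \<gamma> * (\<Sum>j\<in>UNIV. (of_bool (\<gamma> j) - logistic (Z $ j \<bullet> wh)) * (Z $ j \<bullet> v))) = Gf \<bullet> v" .
    qed
  qed
  have "Gf + Gp = (\<Sum>i\<in>UNIV. (pihat i - a (\<sigma> i)) *\<^sub>R U $ \<sigma> i)"
  proof -
    have "Gf + Gp = (\<Sum>i\<in>UNIV. (pihat i - (logistic (wt $ \<sigma> i) + wt $ \<sigma> i / (g * p))) *\<^sub>R U $ \<sigma> i)"
      by (simp add: Gf_def Gp_def Zw Us c_def scaleR_sum_right sum.distrib[symmetric] algebra_simps
          flip: sum_negf)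
    then show ?thesis by (simp add: hs)
  qed
  also have "... = (\<Sum>k\<in>UNIV. \<Sum>i\<in>{i. \<sigma> i = k}. (pihat i - a k) *\<^sub>R U $ k)"
    by (subst group) simp
  also have "... = (\<Sum>k\<in>UNIV. ((\<Sum>i\<in>{i. \<sigma> i = k}. pihat i) - a k * real (n k)) *\<^sub>R U $ k)"
    by (simp add: scaleR_sum_left[symmetric] sum_subtractf n_def mult.commute)
  also have "... = 0" by (simp add: a_eq)
  finally have "Gf + Gp = 0" .
  then show ?thesis
    using dF dP unfolding Let_def pihat_def[symmetric] a_def[symmetric] p_def[symmetric]
    by (auto simp: wt_def[symmetric] wh_def[symmetric])
qed

end
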